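(* Away from characteristic points of a regular surface $\Sigma\subset E(1,1)$, the mean curvature $\mathcal H_{\nabla^{1,\beta},L}:=\mathrm{tr}\,II^{\nabla^{1,\beta},L}$ satisfies $$\lim_{L\to+\infty}\mathcal H_{\nabla^{1,\beta},L}=X_1(\bar p)+X_2(\bar q).$$
   Context: The group $E(1,1)$ of rigid motions of the Minkowski plane is modeled on $\mathbb{R}^3$ with coordinates $(x_1,x_2,x_3)$. Put $X_1=\partial_{x_3}$, $X_2=\frac{1}{\sqrt2}(-e^{x_3}\partial_{x_1}+e^{-x_3}\partial_{x_2})$, $X_3=-\frac1{\sqrt2}(e^{x_3}\partial_{x_1}+e^{-x_3}\partial_{x_2})$, with dual coframe $\omega_1=dx_3$, $\omega_2=\frac1{\sqrt2}(-e^{-x_3}dx_1+e^{x_3}dx_2)$, $\omega=-\frac1{\sqrt2}(e^{-x_3}dx_1+e^{x_3}dx_2)$. For a constant $L>0$, $g_L=\omega_1\otimes\omega_1+\omega_2\otimes\omega_2+L\,\omega\otimes\omega$, so $X_1,X_2,\widetilde X_3:=L^{-1/2}X_3$ is $g_L$-orthonormal; $\langle\cdot,\cdot\rangle_L$ denotes $g_L$ and $\nabla$ its Levi-Civita connection. Let $P^1$, $P^{1,\perp}$ be the $g_L$-orthogonal projections onto $\mathrm{span}\{X_1,X_2\}$ and onto $\mathrm{span}\{X_3\}$. For a real constant $\beta$, $\nabla^{1,\beta}_XY=(1-\beta)\nabla_XY+\beta P^1\nabla_X(P^1Y)+\beta P^{1,\perp}\nabla_X(P^{1,\perp}Y)$.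 A regular surface is a Euclidean $C^2$-smooth compact oriented surface $\Sigma=\{u=0\}$ with $u$ Euclidean $C^2$ and nonvanishing Euclidean gradient; $\nabla_Hu=X_1(u)X_1+X_2(u)X_2$; characteristic points are those with $\nabla_Hu=0$. Put $p=X_1u$, $q=X_2u$, $r=\widetilde X_3u$, $l=\sqrt{p^2+q^2}$, $l_L=\sqrt{p^2+q^2+r^2}$, $\bar p=p/l$, $\bar q=q/l$, $\bar p_L=p/l_L$, $\bar q_L=q/l_L$, $\bar r_L=r/l_L$; $v_L=\bar p_LX_1+\bar q_LX_2+\bar r_L\widetilde X_3$, $e_1=\bar qX_1-\bar pX_2$, $e_2=\bar r_L\bar pX_1+\bar r_L\bar qX_2-\frac{l}{l_L}\widetilde X_3$. The second fundamental form is $II^{\nabla^{1,\beta},L}=(\langle\nabla^{1,\beta}_{e_i}v_L,e_j\rangle_L)_{i,j=1,2}$. *)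

theory Defs
  imports "HOL-Analysis.Analysis"
begin

type_synonym pt = "real^3"
type_synonym vf = "real^3 \<Rightarrow> real^3"

text \<open>Coordinates x_1, x_2, x_3 are the components x$1, x$2, x$3; the coordinate
  vector field d/dx_i is axis i 1. Vector fields are maps R^3 -> R^3 (components in the
  coordinate basis).\<close>

definition dcoord :: "3 \<Rightarrow> real^3" where "dcoord i = axis i 1"

definition dder :: "(real^3 \<Rightarrow> 'b::real_normed_vector) \<Rightarrow> real^3 \<Rightarrow> real^3 \<Rightarrow> 'b" where
  "dder f x v = frechet_derivative f (at x) v"

definition X1 :: vf where "X1 x = dcoord 3"
definition X2 :: vf where
  "X2 x = (1 / sqrt 2) *\<^sub>R ((- exp (x$3)) *\<^sub>R dcoord 1 + exp (- x$3) *\<^sub>R dcoord 2)"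
definition X3 :: vf where
  "X3 x = (- 1 / sqrt 2) *\<^sub>R (exp (x$3) *\<^sub>R dcoord 1 + exp (- x$3) *\<^sub>R dcoord 2)"

definition om1 :: "real^3 \<Rightarrow> real^3 \<Rightarrow> real" where "om1 x v = v$3"
definition om2 :: "real^3 \<Rightarrow> real^3 \<Rightarrow> real" where
  "om2 x v = (1 / sqrt 2) * (- exp (- x$3) * v$1 + exp (x$3) * v$2)"
definition om :: "real^3 \<Rightarrow> real^3 \<Rightarrow> real" where
  "om x v = (- 1 / sqrt 2) * (exp (- x$3) * v$1 + exp (x$3) * v$2)"

definition gL :: "real \<Rightarrow> real^3 \<Rightarrow> real^3 \<Rightarrow> real^3 \<Rightarrow> real" where
  "gL L x v w = om1 x v * om1 x w + om2 x v * om2 x w + L * om x v * om x w"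

definition Xt3 :: "real \<Rightarrow> vf" where "Xt3 L x = (1 / sqrt L) *\<^sub>R X3 x"

definition gmat :: "real \<Rightarrow> real^3 \<Rightarrow> real^3^3" where
  "gmat L x = (\<chi> i j. gL L x (dcoord i) (dcoord j))"

definition christoffel :: "real \<Rightarrow> real^3 \<Rightarrow> 3 \<Rightarrow> 3 \<Rightarrow> 3 \<Rightarrow> real" where
  "christoffel L x k i j = (1/2) * (\<Sum>l\<in>UNIV. matrix_inv (gmat L x) $ k $ l *
      (dder (\<lambda>y. gmat L y $ j $ l) x (dcoord i) + dder (\<lambda>y. gmat L y $ i $ l) x (dcoord j)
       - dder (\<lambda>y. gmat L y $ i $ j) x (dcoord l)))"

definition LC :: "real \<Rightarrow> vf \<Rightarrow> vf \<Rightarrow> vf" where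
  "LC L X Y x = dder Y x (X x) +
     (\<chi> k. \<Sum>i\<in>UNIV. \<Sum>j\<in>UNIV. christoffel L x k i j * (X x)$i * (Y x)$j)"

text \<open>g_L-orthogonal projections onto span{X1,X2} and span{X3}; since X1, X2, Xt3 is
  g_L-orthonormal they are given by the usual orthonormal-basis formula.\<close>
definition P1 :: "real \<Rightarrow> vf \<Rightarrow> vf" where
  "P1 L Y x = gL L x (Y x) (X1 x) *\<^sub>R X1 x + gL L x (Y x) (X2 x) *\<^sub>R X2 x"
definition P1perp :: "real \<Rightarrow> vf \<Rightarrow> vf" where
  "P1perp L Y x = gL L x (Y x) (Xt3 L x) *\<^sub>R Xt3 L x"

definition conn1b :: "real \<Rightarrow> real \<Rightarrow> vf \<Rightarrow> vf \<Rightarrow> vf" where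
  "conn1b beta L X Y x = (1 - beta) *\<^sub>R LC L X Y x
     + beta *\<^sub>R P1 L (LC L X (P1 L Y)) x
     + beta *\<^sub>R P1perp L (LC L X (P1perp L Y)) x"

definition pu :: "(real^3 \<Rightarrow> real) \<Rightarrow> real^3 \<Rightarrow> real" where "pu u x = dder u x (X1 x)"
definition qu :: "(real^3 \<Rightarrow> real) \<Rightarrow> real^3 \<Rightarrow> real" where "qu u x = dder u x (X2 x)"
definition ru :: "real \<Rightarrow> (real^3 \<Rightarrow> real) \<Rightarrow> real^3 \<Rightarrow> real" where "ru L u x = dder u x (Xt3 L x)"
definition lu :: "(real^3 \<Rightarrow> real) \<Rightarrow> real^3 \<Rightarrow> real" where
  "lu u x = sqrt ((pu u x)^2 + (qu u x)^2)"
definition lLu :: "real \<Rightarrow> (real^3 \<Rightarrow> real) \<Rightarrow> real^3 \<Rightarrow> real" where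
  "lLu L u x = sqrt ((pu u x)^2 + (qu u x)^2 + (ru L u x)^2)"
definition pbar :: "(real^3 \<Rightarrow> real) \<Rightarrow> real^3 \<Rightarrow> real" where "pbar u x = pu u x / lu u x"
definition qbar :: "(real^3 \<Rightarrow> real) \<Rightarrow> real^3 \<Rightarrow> real" where "qbar u x = qu u x / lu u x"
definition pbarL :: "real \<Rightarrow> (real^3 \<Rightarrow> real) \<Rightarrow> real^3 \<Rightarrow> real" where "pbarL L u x = pu u x / lLu L u x"
definition qbarL :: "real \<Rightarrow> (real^3 \<Rightarrow> real) \<Rightarrow> real^3 \<Rightarrow> real" where "qbarL L u x = qu u x / lLu L u x"
definition rbarL :: "real \<Rightarrow> (real^3 \<Rightarrow> real) \<Rightarrow> real^3 \<Rightarrow> real" where "rbarL L u x = ru L u x / lLu L u x"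

definition horgrad :: "(real^3 \<Rightarrow> real) \<Rightarrow> vf" where
  "horgrad u x = pu u x *\<^sub>R X1 x + qu u x *\<^sub>R X2 x"

definition vL :: "real \<Rightarrow> (real^3 \<Rightarrow> real) \<Rightarrow> vf" where
  "vL L u x = pbarL L u x *\<^sub>R X1 x + qbarL L u x *\<^sub>R X2 x + rbarL L u x *\<^sub>R Xt3 L x"
definition e1 :: "(real^3 \<Rightarrow> real) \<Rightarrow> vf" where
  "e1 u x = qbar u x *\<^sub>R X1 x - pbar u x *\<^sub>R X2 x"
definition e2 :: "real \<Rightarrow> (real^3 \<Rightarrow> real) \<Rightarrow> vf" where
  "e2 L u x = (rbarL L u x * pbar u x) *\<^sub>R X1 x + (rbarL L u x * qbar u x) *\<^sub>R X2 x
     - (lu u x / lLu L u x) *\<^sub>R Xt3 L x"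

definition frameE :: "real \<Rightarrow> (real^3 \<Rightarrow> real) \<Rightarrow> nat \<Rightarrow> vf" where
  "frameE L u i = (if i = 1 then e1 u else e2 L u)"
definition IIform :: "real \<Rightarrow> real \<Rightarrow> (real^3 \<Rightarrow> real) \<Rightarrow> real^3 \<Rightarrow> nat \<Rightarrow> nat \<Rightarrow> real" where
  "IIform beta L u x i j = gL L x (conn1b beta L (frameE L u i) (vL L u) x) (frameE L u j x)"
definition meancurv :: "real \<Rightarrow> real \<Rightarrow> (real^3 \<Rightarrow> real) \<Rightarrow> real^3 \<Rightarrow> real" where
  "meancurv beta L u x = IIform beta L u x 1 1 + IIform beta L u x 2 2"

definition regular_defining_fn :: "(real^3 \<Rightarrow> real) \<Rightarrow> bool" where
  "regular_defining_fn u \<longleftrightarrow>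
     (\<exists>Du :: real^3 \<Rightarrow> real^3. \<exists>D2u :: real^3 \<Rightarrow> real^3^3.
        (\<forall>x. (u has_derivative (\<lambda>h. Du x \<bullet> h)) (at x)) \<and>
        (\<forall>x. (Du has_derivative (\<lambda>h. D2u x *v h)) (at x)) \<and>
        continuous_on UNIV D2u \<and>
        (\<forall>x. u x = 0 \<longrightarrow> Du x \<noteq> 0)) \<and>
     compact {x. u x = 0}"

end

theory Submission
  imports Defs
begin


lemma dcoord_nth[simp]: "dcoord i $ j = (if j = i then 1 else 0)"
  by (simp add: dcoord_def axis_def)

definition dg :: "real \<Rightarrow> real^3 \<Rightarrow> real^3 \<Rightarrow> real^3 \<Rightarrow> real" where
  "dg L y v w = -(1+L) * (om y v * om2 y w + om2 y v * om y w)"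

lemma nth_has_derivative[derivative_intros]:
  "((\<lambda>y. y $ i) has_derivative (\<lambda>h. h $ i)) F"
  by (rule bounded_linear_imp_has_derivative[OF bounded_linear_vec_nth])

lemma gL_has_derivative:
  "((\<lambda>y. gL L y v w) has_derivative (\<lambda>h. h$3 * dg L y v w)) (at y)"
  unfolding gL_def om1_def om2_def om_def dg_def
  apply (rule derivative_eq_intros refl | simp)+
  apply (simp add: fun_eq_iff field_simps)
  done

lemma dder_gmat:
  "dder (\<lambda>y. gmat L y $ i $ j) y h = h$3 * dg L y (dcoord i) (dcoord j)"
proof -
  have "((\<lambda>y. gmat L y $ i $ j) has_derivative (\<lambda>h. h$3 * dg L y (dcoord i) (dcoord j))) (at y)"
    unfolding gmat_def by (simp add: gL_has_derivative)
  then show ?thesis unfolding dder_def by (metis frechet_derivative_at)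
qed

lemma det_gmat: "L > 0 \<Longrightarrow> det (gmat L y) = L"
  by (simp add: det_3 gmat_def gL_def om1_def om2_def om_def field_simps exp_minus power2_eq_square)


definition KK :: "real \<Rightarrow> real^3 \<Rightarrow> real^3 \<Rightarrow> real^3 \<Rightarrow> real^3 \<Rightarrow> real" where
  "KK L y v w z = 1/2 * (v$3 * dg L y w z + w$3 * dg L y v z - z$3 * dg L y v w)"

lemma chr_eq: "christoffel L y k i j = 1/2 * (\<Sum>l\<in>UNIV. matrix_inv (gmat L y) $ k $ l *
   (dcoord i $ 3 * dg L y (dcoord j) (dcoord l) + dcoord j $ 3 * dg L y (dcoord i) (dcoord l)
    - dcoord l $ 3 * dg L y (dcoord i) (dcoord j)))"
  unfolding christoffel_def dder_gmat by (simp del: dcoord_nth add: algebra_simps)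

lemma gL_G: "gL L y Z W = W \<bullet> (gmat L y *v Z)"
  by (simp add: gL_def gmat_def om1_def om2_def om_def inner_vec_def matrix_vector_mult_def sum_3 algebra_simps)

lemma G_M: "L > 0 \<Longrightarrow> gmat L y ** matrix_inv (gmat L y) = mat 1"
proof -
  assume "L > 0"
  then have "invertible (gmat L y)" by (simp add: invertible_det_nz det_gmat)
  then show ?thesis unfolding invertible_def matrix_inv_def by (metis (mono_tags, lifting) someI_ex)
qed

lemma dg_expand: "dg L y v w = (\<Sum>i\<in>UNIV. \<Sum>j\<in>UNIV. v$i * w$j * dg L y (dcoord i) (dcoord j))"
  by (simp add: dg_def om_def om2_def sum_3 algebra_simps)

lemma Gam_gL:
  assumes "L > 0"
  shows "gL L y (\<chi> k. \<Sum>i\<in>UNIV. \<Sum>j\<in>UNIV. christoffel L y k i j * v$i * w$j) z = KK L y v w z"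
proof -
  define M where "M = matrix_inv (gmat L y)"
  define low where "low = (\<chi> l. 1/2 * (\<Sum>i\<in>UNIV. \<Sum>j\<in>UNIV. v$i * w$j *
   (dcoord i $ 3 * dg L y (dcoord j) (dcoord l) + dcoord j $ 3 * dg L y (dcoord i) (dcoord l)
    - dcoord l $ 3 * dg L y (dcoord i) (dcoord j))))"
  have 1: "(\<chi> k. \<Sum>i\<in>UNIV. \<Sum>j\<in>UNIV. christoffel L y k i j * v$i * w$j) = M *v low"
    unfolding chr_eq M_def[symmetric] low_def
    by (simp add: vec_eq_iff matrix_vector_mult_def sum_3 algebra_simps)
  have 2: "gmat L y *v (M *v low) = low"
    using G_M[OF assms] unfolding M_def by (simp add: matrix_vector_mul_assoc)
  have 3: "z \<bullet> low = KK L y v w z"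
    unfolding low_def KK_def
    by (simp add: inner_vec_def sum_3 dg_def om_def om2_def algebra_simps)
  show ?thesis unfolding gL_G 1 2 3 ..
qed


definition fc :: "real \<Rightarrow> real^3 \<Rightarrow> real \<Rightarrow> real \<Rightarrow> real \<Rightarrow> real^3" where
  "fc L y a b c = a *\<^sub>R X1 y + b *\<^sub>R X2 y + c *\<^sub>R Xt3 L y"

lemma fc_nth:
  "fc L y a b c $ 1 = (- b * exp (y$3) - c / sqrt L * exp (y$3)) / sqrt 2"
  "fc L y a b c $ 2 = (b * exp (- y$3) - c / sqrt L * exp (- y$3)) / sqrt 2"
  "fc L y a b c $ 3 = a"
  by (simp_all add: fc_def X1_def X2_def X3_def Xt3_def field_simps)

lemma om_fc:
  assumes "L > 0"
  shows "om1 y (fc L y a b c) = a" "om2 y (fc L y a b c) = b" "om y (fc L y a b c) = c / sqrt L"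
  using assms by (simp_all add: om1_def om2_def om_def fc_nth field_simps exp_minus)

lemma gL_fc: "L > 0 \<Longrightarrow> gL L y (fc L y a b c) (fc L y a' b' c') = a*a' + b*b' + c*c'"
  by (simp add: gL_def om_fc field_simps)

lemma dg_fc: "L > 0 \<Longrightarrow> dg L y (fc L y a b c) (fc L y a' b' c') = -(1+L) * (c * b' + b * c') / sqrt L"
  by (simp add: dg_def om_fc field_simps)

lemma fc_add: "fc L y a b c + fc L y a' b' c' = fc L y (a+a') (b+b') (c+c')"
  by (simp add: fc_def algebra_simps)
lemma fc_scale: "r *\<^sub>R fc L y a b c = fc L y (r*a) (r*b) (r*c)"
  by (simp add: fc_def algebra_simps)
lemma X1_fc: "X1 y = fc L y 1 0 0" by (simp add: fc_def)
lemma X2_fc: "X2 y = fc L y 0 1 0" by (simp add: fc_def)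
lemma Xt3_fc: "Xt3 L y = fc L y 0 0 1" by (simp add: fc_def)
lemma X3_fc: "L > 0 \<Longrightarrow> X3 y = fc L y 0 0 (sqrt L)" by (simp add: fc_def Xt3_def)

lemma gL_add1: "gL L y (v + v') w = gL L y v w + gL L y v' w"
  by (simp add: gL_def om1_def om2_def om_def algebra_simps)
lemma gL_scale1: "gL L y (r *\<^sub>R v) w = r * gL L y v w"
  by (simp add: gL_def om1_def om2_def om_def algebra_simps)

lemma X1_der: "(X1 has_derivative (\<lambda>h. 0)) (at y)"
  unfolding X1_def by simp
lemma X2_der: "(X2 has_derivative (\<lambda>h. h$3 *\<^sub>R X3 y)) (at y)"
  unfolding X2_def X3_def
  apply (rule derivative_eq_intros refl | simp)+
  apply (simp add: fun_eq_iff algebra_simps)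
  done
lemma X3_der: "(X3 has_derivative (\<lambda>h. h$3 *\<^sub>R X2 y)) (at y)"
  unfolding X2_def X3_def
  apply (rule derivative_eq_intros refl | simp)+
  apply (simp add: fun_eq_iff algebra_simps)
  done


lemma fc_eqI: "a = a' \<Longrightarrow> b = b' \<Longrightarrow> c = c' \<Longrightarrow> fc L y a b c = fc L y a' b' c'"
  by simp

lemma fcfun_der:
  assumes L: "L > 0" and da: "(a has_derivative da) (at y)" and db: "(b has_derivative db) (at y)"
    and dc: "(c has_derivative dc) (at y)"
  shows "((\<lambda>z. fc L z (a z) (b z) (c z)) has_derivative
     (\<lambda>h. fc L y (da h) (db h + h$3 * c y / sqrt L) (dc h + h$3 * b y * sqrt L))) (at y)"
proof -
  have "((\<lambda>z. a z *\<^sub>R X1 z + b z *\<^sub>R X2 z + c z *\<^sub>R ((1 / sqrt L) *\<^sub>R X3 z)) has_derivative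
     (\<lambda>h. (a y *\<^sub>R 0 + da h *\<^sub>R X1 y) + (b y *\<^sub>R (h$3 *\<^sub>R X3 y) + db h *\<^sub>R X2 y)
        + (c y *\<^sub>R ((1 / sqrt L) *\<^sub>R (h$3 *\<^sub>R X2 y)) + dc h *\<^sub>R ((1 / sqrt L) *\<^sub>R X3 y)))) (at y)"
  proof -
    have t1: "((\<lambda>z. a z *\<^sub>R X1 z) has_derivative (\<lambda>h. a y *\<^sub>R 0 + da h *\<^sub>R X1 y)) (at y)"
      by (rule has_derivative_scaleR[OF da X1_der])
    have t2: "((\<lambda>z. b z *\<^sub>R X2 z) has_derivative (\<lambda>h. b y *\<^sub>R (h$3 *\<^sub>R X3 y) + db h *\<^sub>R X2 y)) (at y)"
      by (rule has_derivative_scaleR[OF db X2_der])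
    have t3': "((\<lambda>z. (1 / sqrt L) *\<^sub>R X3 z) has_derivative (\<lambda>h. (1 / sqrt L) *\<^sub>R (h$3 *\<^sub>R X2 y))) (at y)"
      by (rule has_derivative_scaleR_right[OF X3_der])
    have t3: "((\<lambda>z. c z *\<^sub>R ((1 / sqrt L) *\<^sub>R X3 z)) has_derivative (\<lambda>h. c y *\<^sub>R ((1 / sqrt L) *\<^sub>R (h$3 *\<^sub>R X2 y)) + dc h *\<^sub>R ((1 / sqrt L) *\<^sub>R X3 y))) (at y)"
      by (rule has_derivative_scaleR[OF dc t3'])
    show ?thesis by (rule has_derivative_add[OF has_derivative_add[OF t1 t2] t3])
  qed
  moreover have E1: "(\<lambda>h. (a y *\<^sub>R 0 + da h *\<^sub>R X1 y) + (b y *\<^sub>R (h$3 *\<^sub>R X3 y) + db h *\<^sub>R X2 y)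
        + (c y *\<^sub>R ((1 / sqrt L) *\<^sub>R (h$3 *\<^sub>R X2 y)) + dc h *\<^sub>R ((1 / sqrt L) *\<^sub>R X3 y)))
     = (\<lambda>h. fc L y (da h) (db h + h$3 * c y / sqrt L) (dc h + h$3 * b y * sqrt L))"
    apply (rule ext)
    apply (simp only: X1_fc[of _ L] X2_fc[of _ L] X3_fc[OF L] fc_scale fc_add scaleR_zero_right add_0_left)
    apply (rule fc_eqI)
    using L by (simp_all add: field_simps)
  moreover have E2: "(\<lambda>z. fc L z (a z) (b z) (c z)) = (\<lambda>z. a z *\<^sub>R X1 z + b z *\<^sub>R X2 z + c z *\<^sub>R ((1 / sqrt L) *\<^sub>R X3 z))"
    by (rule ext) (simp only: fc_def Xt3_def)
  ultimately show ?thesis by (simp only:)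
qed

lemma LC_frame:
  assumes L: "L > 0" and da: "(a has_derivative da) (at y)" and db: "(b has_derivative db) (at y)"
    and dc: "(c has_derivative dc) (at y)"
    and Y: "Y = (\<lambda>z. fc L z (a z) (b z) (c z))"
  shows "gL L y (LC L X Y y) W = gL L y (fc L y (da (X y)) (db (X y) + X y$3 * c y / sqrt L)
           (dc (X y) + X y$3 * b y * sqrt L)) W + KK L y (X y) (Y y) W"
proof -
  have "dder Y y (X y) = fc L y (da (X y)) (db (X y) + X y$3 * c y / sqrt L) (dc (X y) + X y$3 * b y * sqrt L)"
    unfolding dder_def Y fcfun_der[OF L da db dc, THEN frechet_derivative_at, symmetric] by (rule refl)
  then show ?thesis unfolding LC_def gL_add1 Gam_gL[OF L] by (simp only:)
qed


lemma gL_sym: "gL L y v w = gL L y w v"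
  by (simp add: gL_def algebra_simps)

lemma P1_fc: "L > 0 \<Longrightarrow> P1 L (\<lambda>z. fc L z (a z) (b z) (c z)) = (\<lambda>z. fc L z (a z) (b z) ((\<lambda>z. 0) z))"
  by (simp add: fun_eq_iff P1_def X1_fc[of _ L] X2_fc[of _ L] gL_fc fc_scale fc_add)

lemma P1perp_fc: "L > 0 \<Longrightarrow> P1perp L (\<lambda>z. fc L z (a z) (b z) (c z)) = (\<lambda>z. fc L z ((\<lambda>z. 0) z) ((\<lambda>z. 0) z) (c z))"
  by (simp add: fun_eq_iff P1perp_def Xt3_fc[of L] gL_fc fc_scale)

lemma gL_P1: "gL L y (P1 L Z y) W = gL L y (Z y) (X1 y) * gL L y (X1 y) W + gL L y (Z y) (X2 y) * gL L y (X2 y) W"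
  by (simp add: P1_def gL_add1 gL_scale1)

lemma gL_P1perp: "gL L y (P1perp L Z y) W = gL L y (Z y) (Xt3 L y) * gL L y (Xt3 L y) W"
  by (simp add: P1perp_def gL_scale1)

definition LCc :: "real \<Rightarrow> real \<Rightarrow> real \<Rightarrow> real \<Rightarrow> real \<Rightarrow> real \<Rightarrow> real \<Rightarrow> real \<Rightarrow> real \<Rightarrow> real
   \<Rightarrow> real \<Rightarrow> real \<Rightarrow> real \<Rightarrow> real" where
  "LCc L x1 x2 x3 a0 b0 c0 dA dB dC w1 w2 w3 =
     dA*w1 + (dB + x1*c0/ sqrt L)*w2 + (dC + x1*b0* sqrt L)*w3
     + 1/2*(x1 * (-(1+L)*(c0*w2 + b0*w3)/ sqrt L) + a0 * (-(1+L)*(x3*w2+x2*w3)/ sqrt L)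
            - w1*(-(1+L)*(x3*b0 + x2*c0)/ sqrt L))"

lemma LC_fc:
  assumes L: "L > 0" and da: "(a has_derivative da) (at y)" and db: "(b has_derivative db) (at y)"
    and dc: "(c has_derivative dc) (at y)" and X: "X y = fc L y x1 x2 x3"
  shows "gL L y (LC L X (\<lambda>z. fc L z (a z) (b z) (c z)) y) (fc L y w1 w2 w3) =
     LCc L x1 x2 x3 (a y) (b y) (c y) (da (X y)) (db (X y)) (dc (X y)) w1 w2 w3"
  unfolding LC_frame[OF L da db dc refl]
  by (simp add: X gL_fc[OF L] KK_def dg_fc[OF L] fc_nth LCc_def)

lemma conn_fc:
  assumes L: "L > 0" and da: "(a has_derivative da) (at y)" and db: "(b has_derivative db) (at y)"
    and dc: "(c has_derivative dc) (at y)" and X: "X y = fc L y x1 x2 x3"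
  shows "gL L y (conn1b beta L X (\<lambda>z. fc L z (a z) (b z) (c z)) y) (fc L y w1 w2 w3) =
     (1 - beta) * LCc L x1 x2 x3 (a y) (b y) (c y) (da (X y)) (db (X y)) (dc (X y)) w1 w2 w3
     + beta * (LCc L x1 x2 x3 (a y) (b y) 0 (da (X y)) (db (X y)) 0 1 0 0 * w1
             + LCc L x1 x2 x3 (a y) (b y) 0 (da (X y)) (db (X y)) 0 0 1 0 * w2)
     + beta * (LCc L x1 x2 x3 0 0 (c y) 0 0 (dc (X y)) 0 0 1 * w3)"
proof -
  have z: "((\<lambda>z. 0::real) has_derivative (\<lambda>h. 0)) (at y)" by simp
  show ?thesis
    unfolding conn1b_def gL_add1 gL_scale1 gL_P1 gL_P1perp P1_fc[OF L] P1perp_fc[OF L]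
    unfolding X1_fc[of y L] X2_fc[of y L] Xt3_fc[of L y]
    by (simp add: LC_fc[where X=X and ?x1.0=x1 and ?x2.0=x2 and ?x3.0=x3, OF L da db dc X] LC_fc[where X=X and ?x1.0=x1 and ?x2.0=x2 and ?x3.0=x3, OF L da db z X] LC_fc[where X=X and ?x1.0=x1 and ?x2.0=x2 and ?x3.0=x3, OF L z z dc X] gL_fc[OF L])
qed


definition connF where
  "connF L beta x1 x2 x3 a0 b0 c0 dA dB dC =
     (1 - beta) * LCc L x1 x2 x3 a0 b0 c0 dA dB dC x1 x2 x3
     + beta * (LCc L x1 x2 x3 a0 b0 0 dA dB 0 1 0 0 * x1
             + LCc L x1 x2 x3 a0 b0 0 dA dB 0 0 1 0 * x2)
     + beta * (LCc L x1 x2 x3 0 0 c0 0 0 dC 0 0 1 * x3)"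

lemma alg_identity0:
  fixes s P Q R N l a1 a2 b1 b2 c1 c2 beta :: real
  assumes s: "s > 0" and N: "N > 0" and l: "l > 0"
  shows "connF (s * s) beta (Q/l) (-P/l) 0 (P/N) (Q/N) (R/N) a1 b1 c1
       + connF (s * s) beta (R/N*(P/l)) (R/N*(Q/l)) (-(l/N)) (P/N) (Q/N) (R/N) a2 b2 c2
       = Q/l*a1 - P/l*b1 + R/N*(P/l)*a2 + R/N*(Q/l)*b2 - l/N*c2
         + (1-beta)*((R/N)^3*(P/l)*(Q/l) - R/N*(P/l)*(Q/l) + l/N*(R/N)*(P/N)*(Q/l)) / s"
proof -
  have "sqrt (s * s) = s" using s by simp
  then show ?thesis
    unfolding connF_def LCc_def
    using s N l by (simp add: field_simps power3_eq_cube)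
qed

lemma alg_identity:
  fixes L P Q R N l a1 a2 b1 b2 c1 c2 beta :: real
  assumes L: "L > 0" and N: "N > 0" and l: "l > 0"
  shows "connF L beta (Q/l) (-P/l) 0 (P/N) (Q/N) (R/N) a1 b1 c1
       + connF L beta (R/N*(P/l)) (R/N*(Q/l)) (-(l/N)) (P/N) (Q/N) (R/N) a2 b2 c2
       = Q/l*a1 - P/l*b1 + R/N*(P/l)*a2 + R/N*(Q/l)*b2 - l/N*c2
         + (1-beta)*((R/N)^3*(P/l)*(Q/l) - R/N*(P/l)*(Q/l) + l/N*(R/N)*(P/N)*(Q/l)) / sqrt L"
  using alg_identity0[of "sqrt L" N l] L N l by simp


lemma der_qs:
  fixes F P Q R :: "real^3 \<Rightarrow> real"
  assumes F: "(F has_derivative dF) (at x)" and P: "(P has_derivative dP) (at x)"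
    and Q: "(Q has_derivative dQ) (at x)" and R: "(R has_derivative dR) (at x)"
    and pos: "P x ^ 2 + Q x ^ 2 + R x ^ 2 > 0"
  shows "((\<lambda>y. F y / sqrt (P y ^ 2 + Q y ^ 2 + R y ^ 2)) has_derivative
     (\<lambda>h. (dF h * sqrt (P x ^ 2 + Q x ^ 2 + R x ^ 2) - F x * ((P x * dP h + Q x * dQ h + R x * dR h)
        / sqrt (P x ^ 2 + Q x ^ 2 + R x ^ 2))) / (sqrt (P x ^ 2 + Q x ^ 2 + R x ^ 2) * sqrt (P x ^ 2 + Q x ^ 2 + R x ^ 2)))) (at x)"
proof -
  let ?g = "\<lambda>y. P y ^ 2 + Q y ^ 2 + R y ^ 2"
  have s: "(?g has_derivative (\<lambda>h. 2*P x*dP h + 2*Q x*dQ h + 2*R x*dR h)) (at x)"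
    apply (rule has_derivative_eq_rhs)
     apply (rule derivative_eq_intros F P Q R refl)+
    by (simp add: fun_eq_iff)
  have sq: "((\<lambda>y. sqrt (?g y)) has_derivative (\<lambda>h. (2*P x*dP h + 2*Q x*dQ h + 2*R x*dR h) * (inverse (sqrt (?g x)) / 2))) (at x)"
    by (rule has_derivative_real_sqrt[OF pos s])
  have ne: "sqrt (?g x) \<noteq> 0" using pos by simp
  have e: "\<And>h. (2*P x*dP h + 2*Q x*dQ h + 2*R x*dR h) * (inverse (sqrt (?g x)) / 2) = (P x * dP h + Q x * dQ h + R x * dR h) / sqrt (?g x)"
    by (simp add: divide_simps)
  show ?thesis
    apply (rule has_derivative_eq_rhs)
     apply (rule has_derivative_divide'[OF F sq ne])
    by (simp only: e)
qed


definition quo :: "real \<Rightarrow> real \<Rightarrow> real \<Rightarrow> real \<Rightarrow> real \<Rightarrow> real \<Rightarrow> real \<Rightarrow> real \<Rightarrow> real \<Rightarrow> real" where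
  "quo P Q S t F dF dp dq ds = (dF * sqrt (P^2 + Q^2 + (S*t)^2) - F * ((P*dp + Q*dq + (S*t)*(ds*t)) / sqrt (P^2 + Q^2 + (S*t)^2)))
     / (sqrt (P^2 + Q^2 + (S*t)^2) * sqrt (P^2 + Q^2 + (S*t)^2))"

definition Phi where
  "Phi P Q S dPv dQv dSv dP1 dP2 dP3 dQ1 dQ2 dQ3 dS1 dS2 dS3 beta t =
   (let l = sqrt (P^2 + Q^2); R = S*t; N = sqrt (P^2 + Q^2 + (S*t)^2);
      al = R/N*(P/l); be = R/N*(Q/l); ga = -(l/N)*t;
      dPe = al*dP1 + be*dP2 + ga*dP3; dQe = al*dQ1 + be*dQ2 + ga*dQ3; dSe = al*dS1 + be*dS2 + ga*dS3
    in Q/l * quo P Q S t P dPv dPv dQv dSv - P/l * quo P Q S t Q dQv dPv dQv dSv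
       + R/N*(P/l) * quo P Q S t P dPe dPe dQe dSe + R/N*(Q/l) * quo P Q S t Q dQe dPe dQe dSe
       - l/N * quo P Q S t R (dSe*t) dPe dQe dSe
       + (1-beta)*((R/N)^3*(P/l)*(Q/l) - R/N*(P/l)*(Q/l) + l/N*(R/N)*(P/N)*(Q/l)) * t)"

lemma eps_lim: "((\<lambda>L::real. 1 / sqrt L) \<longlongrightarrow> 0) at_top"
  by (rule tendsto_divide_0[OF tendsto_const filterlim_at_top_imp_at_infinity[OF sqrt_at_top]])

lemma Phi_lim:
  assumes pos: "P^2 + Q^2 > 0"
    and v: "dPv = Q / sqrt (P^2+Q^2) * dP1 - P / sqrt (P^2+Q^2) * dP2"
           "dQv = Q / sqrt (P^2+Q^2) * dQ1 - P / sqrt (P^2+Q^2) * dQ2"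
  shows "((\<lambda>L. Phi P Q S dPv dQv dSv dP1 dP2 dP3 dQ1 dQ2 dQ3 dS1 dS2 dS3 beta (1 / sqrt L)) \<longlongrightarrow>
    (dP1 * sqrt (P^2+Q^2) - P * ((P*dP1 + Q*dQ1) / sqrt (P^2+Q^2))) / (sqrt (P^2+Q^2) * sqrt (P^2+Q^2))
  + (dQ2 * sqrt (P^2+Q^2) - Q * ((P*dP2 + Q*dQ2) / sqrt (P^2+Q^2))) / (sqrt (P^2+Q^2) * sqrt (P^2+Q^2))) at_top"
proof -
  have l: "sqrt (P^2+Q^2) > 0" using pos by simp
  have c: "isCont (Phi P Q S dPv dQv dSv dP1 dP2 dP3 dQ1 dQ2 dQ3 dS1 dS2 dS3 beta) 0"
    unfolding Phi_def quo_def Let_def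
    using l by (intro continuous_intros) auto
  have "((\<lambda>L. Phi P Q S dPv dQv dSv dP1 dP2 dP3 dQ1 dQ2 dQ3 dS1 dS2 dS3 beta (1 / sqrt L)) \<longlongrightarrow>
     Phi P Q S dPv dQv dSv dP1 dP2 dP3 dQ1 dQ2 dQ3 dS1 dS2 dS3 beta 0) at_top"
    by (rule isCont_tendsto_compose[OF c eps_lim])
  moreover have "Phi P Q S dPv dQv dSv dP1 dP2 dP3 dQ1 dQ2 dQ3 dS1 dS2 dS3 beta 0 =
    (dP1 * sqrt (P^2+Q^2) - P * ((P*dP1 + Q*dQ1) / sqrt (P^2+Q^2))) / (sqrt (P^2+Q^2) * sqrt (P^2+Q^2))
  + (dQ2 * sqrt (P^2+Q^2) - Q * ((P*dP2 + Q*dQ2) / sqrt (P^2+Q^2))) / (sqrt (P^2+Q^2) * sqrt (P^2+Q^2))"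
  proof -
    define l where "l = sqrt (P^2+Q^2)"
    have ll: "l * l = P^2 + Q^2" "l > 0" using pos l unfolding l_def by (auto simp: power2_eq_square[symmetric])
    have L: "sqrt (P^2+Q^2) = l" unfolding l_def ..
    have "Phi P Q S dPv dQv dSv dP1 dP2 dP3 dQ1 dQ2 dQ3 dS1 dS2 dS3 beta 0 =
       Q/l * ((dPv * l - P * ((P*dPv + Q*dQv) / l)) / (l*l)) - P/l * ((dQv * l - Q * ((P*dPv + Q*dQv) / l)) / (l*l))"
      unfolding Phi_def quo_def Let_def by (simp add: L)
    also have "\<dots> = (dP1 * l - P * ((P*dP1 + Q*dQ1) / l)) / (l * l) + (dQ2 * l - Q * ((P*dP2 + Q*dQ2) / l)) / (l * l)"
    proof -
      have A: "\<And>dp dq. (dp * l - P * ((P*dp + Q*dq) / l)) / (l*l) = Q*(Q*dp - P*dq)/(l*l*l)"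
      proof -
        fix dp dq
        have "(dp * l - P * ((P*dp + Q*dq) / l)) / (l*l) = (dp*(l*l) - P*(P*dp + Q*dq))/(l*l*l)"
          using ll(2) by (simp add: field_simps)
        also have "\<dots> = Q*(Q*dp - P*dq)/(l*l*l)" unfolding ll(1) by (simp add: algebra_simps power2_eq_square)
        finally show "(dp * l - P * ((P*dp + Q*dq) / l)) / (l*l) = Q*(Q*dp - P*dq)/(l*l*l)" .
      qed
      have B: "\<And>dp dq. (dq * l - Q * ((P*dp + Q*dq) / l)) / (l*l) = - P*(Q*dp - P*dq)/(l*l*l)"
      proof -
        fix dp dq
        have "(dq * l - Q * ((P*dp + Q*dq) / l)) / (l*l) = (dq*(l*l) - Q*(P*dp + Q*dq))/(l*l*l)"
          using ll(2) by (simp add: field_simps)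
        also have "\<dots> = - P*(Q*dp - P*dq)/(l*l*l)" unfolding ll(1) by (simp add: algebra_simps power2_eq_square)
        finally show "(dq * l - Q * ((P*dp + Q*dq) / l)) / (l*l) = - P*(Q*dp - P*dq)/(l*l*l)" .
      qed
      have "Q/l * (Q*(Q*dPv - P*dQv)/(l*l*l)) - P/l * (- P*(Q*dPv - P*dQv)/(l*l*l))
          = (Q*Q + P*P) * (Q*dPv - P*dQv) / (l*l*l*l)"
        using ll(2) by (simp add: field_simps)
      also have "\<dots> = (l*l) * (Q*dPv - P*dQv) / (l*l*l*l)" using ll(1) by (simp add: power2_eq_square algebra_simps)
      also have "\<dots> = (Q*dPv - P*dQv) / (l*l)" using ll(2) by (simp add: field_simps)
      also have "\<dots> = (Q*(Q*dP1 - P*dQ1) - P*(Q*dP2 - P*dQ2)) / (l*l*l)"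
        unfolding v L using ll(2) by (simp add: field_simps)
      also have "\<dots> = Q*(Q*dP1 - P*dQ1)/(l*l*l) + - P*(Q*dP2 - P*dQ2)/(l*l*l)"
        using ll(2) by (simp add: field_simps)
      finally show ?thesis unfolding A B .
    qed
    finally show ?thesis unfolding L .
  qed
  ultimately show ?thesis by simp
qed


lemma lin_fc: "linear f \<Longrightarrow> f (fc L y a b c) = a * f (X1 y) + b * f (X2 y) + c * f (Xt3 L y)"
  by (simp add: fc_def linear_add linear_scale)

theorem proposition4p7:
  fixes u :: "real^3 \<Rightarrow> real" and beta :: real and x :: "real^3"
  assumes "regular_defining_fn u"
    and "u x = 0"
    and "horgrad u x \<noteq> 0"
  shows "((\<lambda>L. meancurv beta L u x) \<longlongrightarrow>
           dder (pbar u) x (X1 x) + dder (qbar u) x (X2 x)) at_top"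
proof -
  obtain Du :: "real^3 \<Rightarrow> real^3" and D2u :: "real^3 \<Rightarrow> real^3^3" where
    du: "\<And>y. (u has_derivative (\<lambda>h. Du y \<bullet> h)) (at y)" and
    d2: "\<And>y. (Du has_derivative (\<lambda>h. D2u y *v h)) (at y)"
    using assms(1) unfolding regular_defining_fn_def by blast
  have dder_u: "\<And>y v. dder u y v = Du y \<bullet> v"
    unfolding dder_def frechet_derivative_at[OF du, symmetric] by simp
  define P where "P = (\<lambda>y. Du y \<bullet> X1 y)"
  define Q where "Q = (\<lambda>y. Du y \<bullet> X2 y)"
  define S where "S = (\<lambda>y. Du y \<bullet> X3 y)"
  have pu: "pu u = P" by (simp add: fun_eq_iff pu_def dder_u P_def)
  have qu: "qu u = Q" by (simp add: fun_eq_iff qu_def dder_u Q_def)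
  have ru: "\<And>L. ru L u = (\<lambda>y. S y * (1 / sqrt L))"
    by (simp add: fun_eq_iff ru_def dder_u S_def Xt3_def inner_scaleR_right)
  obtain dP where dP: "(P has_derivative dP) (at x)"
    unfolding P_def using has_derivative_inner[OF d2 X1_der] by blast
  obtain dQ where dQ: "(Q has_derivative dQ) (at x)"
    unfolding Q_def using has_derivative_inner[OF d2 X2_der] by blast
  obtain dS where dS: "(S has_derivative dS) (at x)"
    unfolding S_def using has_derivative_inner[OF d2 X3_der] by blast
  have lP: "linear dP" "linear dQ" "linear dS"
    using dP dQ dS by (auto simp: has_derivative_linear)
  have hg: "horgrad u x = P x *\<^sub>R X1 x + Q x *\<^sub>R X2 x" by (simp add: horgrad_def pu qu)
  have pos: "P x ^ 2 + Q x ^ 2 > 0"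
    using assms(3) unfolding hg sum_power2_gt_zero_iff by auto
  define l where "l = sqrt (P x ^ 2 + Q x ^ 2)"
  have lpos: "l > 0" using pos unfolding l_def by simp
  have z: "((\<lambda>y. 0::real) has_derivative (\<lambda>h. 0)) (at x)" by simp
  have pbar_eq: "pbar u = (\<lambda>y. P y / sqrt (P y ^ 2 + Q y ^ 2))"
    by (simp add: fun_eq_iff pbar_def lu_def pu qu)
  have qbar_eq: "qbar u = (\<lambda>y. Q y / sqrt (P y ^ 2 + Q y ^ 2))"
    by (simp add: fun_eq_iff qbar_def lu_def pu qu)
  have hp: "((\<lambda>y. P y / sqrt (P y ^ 2 + Q y ^ 2)) has_derivative
     (\<lambda>h. (dP h * sqrt (P x^2+Q x^2) - P x * ((P x*dP h + Q x*dQ h) / sqrt (P x^2+Q x^2))) / (sqrt (P x^2+Q x^2) * sqrt (P x^2+Q x^2)))) (at x)"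
    using der_qs[OF dP dP dQ z] pos by simp
  have hq: "((\<lambda>y. Q y / sqrt (P y ^ 2 + Q y ^ 2)) has_derivative
     (\<lambda>h. (dQ h * sqrt (P x^2+Q x^2) - Q x * ((P x*dP h + Q x*dQ h) / sqrt (P x^2+Q x^2))) / (sqrt (P x^2+Q x^2) * sqrt (P x^2+Q x^2)))) (at x)"
    using der_qs[OF dQ dP dQ z] pos by simp
  have tgt: "dder (pbar u) x (X1 x) + dder (qbar u) x (X2 x) =
    (dP (X1 x) * sqrt (P x^2+Q x^2) - P x * ((P x*dP (X1 x) + Q x*dQ (X1 x)) / sqrt (P x^2+Q x^2))) / (sqrt (P x^2+Q x^2) * sqrt (P x^2+Q x^2))
  + (dQ (X2 x) * sqrt (P x^2+Q x^2) - Q x * ((P x*dP (X2 x) + Q x*dQ (X2 x)) / sqrt (P x^2+Q x^2))) / (sqrt (P x^2+Q x^2) * sqrt (P x^2+Q x^2))"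
    unfolding dder_def pbar_eq qbar_eq
      hp[THEN frechet_derivative_at, symmetric] hq[THEN frechet_derivative_at, symmetric] ..
  define v1 where "v1 = e1 u x"
  have v1eq: "v1 = fc 1 x (Q x / l) (- (P x / l)) 0"
    by (simp add: v1_def e1_def fc_def qbar_def pbar_def lu_def pu qu l_def)
  have dv1: "dP v1 = Q x / sqrt (P x^2+Q x^2) * dP (X1 x) - P x / sqrt (P x^2+Q x^2) * dP (X2 x)"
            "dQ v1 = Q x / sqrt (P x^2+Q x^2) * dQ (X1 x) - P x / sqrt (P x^2+Q x^2) * dQ (X2 x)"
    unfolding v1eq using lP by (simp_all add: lin_fc l_def)
  have lim: "((\<lambda>L. Phi (P x) (Q x) (S x) (dP v1) (dQ v1) (dS v1) (dP (X1 x)) (dP (X2 x)) (dP (X3 x))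
       (dQ (X1 x)) (dQ (X2 x)) (dQ (X3 x)) (dS (X1 x)) (dS (X2 x)) (dS (X3 x)) beta (1 / sqrt L)) \<longlongrightarrow>
       dder (pbar u) x (X1 x) + dder (qbar u) x (X2 x)) at_top"
    unfolding tgt by (rule Phi_lim[OF pos dv1])
  have eq: "meancurv beta L u x = Phi (P x) (Q x) (S x) (dP v1) (dQ v1) (dS v1) (dP (X1 x)) (dP (X2 x)) (dP (X3 x))
       (dQ (X1 x)) (dQ (X2 x)) (dQ (X3 x)) (dS (X1 x)) (dS (X2 x)) (dS (X3 x)) beta (1 / sqrt L)" if L: "L > 0" for L
  proof -
    define t where "t = 1 / sqrt L"
    define R where "R = (\<lambda>y. S y * t)"
    define N where "N = sqrt (P x ^ 2 + Q x ^ 2 + R x ^ 2)"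
    have Npos: "N > 0" using pos unfolding N_def
      by (metis add_pos_nonneg real_sqrt_gt_zero zero_le_power2)
    have dR: "(R has_derivative (\<lambda>h. dS h * t)) (at x)"
      unfolding R_def by (rule has_derivative_mult_left[OF dS])
    have pos3: "P x ^ 2 + Q x ^ 2 + R x ^ 2 > 0" using pos
      by (metis add_pos_nonneg zero_le_power2)
    define a where "a = (\<lambda>y. P y / sqrt (P y ^ 2 + Q y ^ 2 + R y ^ 2))"
    define b where "b = (\<lambda>y. Q y / sqrt (P y ^ 2 + Q y ^ 2 + R y ^ 2))"
    define c where "c = (\<lambda>y. R y / sqrt (P y ^ 2 + Q y ^ 2 + R y ^ 2))"
    define qq where "qq = (\<lambda>F dF h. (dF h * N - F * ((P x * dP h + Q x * dQ h + R x * (dS h * t)) / N)) / (N * N))"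
    have da: "(a has_derivative qq (P x) dP) (at x)"
      unfolding a_def qq_def N_def by (rule der_qs[OF dP dP dQ dR pos3])
    have db: "(b has_derivative qq (Q x) dQ) (at x)"
      unfolding b_def qq_def N_def by (rule der_qs[OF dQ dP dQ dR pos3])
    have dc: "(c has_derivative qq (R x) (\<lambda>h. dS h * t)) (at x)"
      unfolding c_def qq_def N_def by (rule der_qs[OF dR dP dQ dR pos3])
    have vL: "vL L u = (\<lambda>z. fc L z (a z) (b z) (c z))"
      by (simp add: fun_eq_iff vL_def fc_def a_def b_def c_def pbarL_def qbarL_def rbarL_def lLu_def pu qu ru R_def t_def)
    have e1: "e1 u x = fc L x (Q x / l) (- P x / l) 0"
      by (simp add: e1_def fc_def qbar_def pbar_def lu_def pu qu l_def)
    have e2: "e2 L u x = fc L x (R x / N * (P x / l)) (R x / N * (Q x / l)) (- (l / N))"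
      by (simp add: e2_def fc_def qbar_def pbar_def rbarL_def lLu_def lu_def pu qu ru l_def N_def R_def t_def)
    have c1: "gL L x (conn1b beta L (e1 u) (\<lambda>z. fc L z (a z) (b z) (c z)) x) (e1 u x) =
      connF L beta (Q x / l) (- P x / l) 0 (a x) (b x) (c x) (qq (P x) dP (e1 u x)) (qq (Q x) dQ (e1 u x)) (qq (R x) (\<lambda>h. dS h * t) (e1 u x))"
      using conn_fc[where X="e1 u" and beta=beta and ?w1.0="Q x / l" and ?w2.0="- P x / l" and ?w3.0=0, OF L da db dc e1]
      unfolding e1[symmetric] connF_def .
    have c2: "gL L x (conn1b beta L (e2 L u) (\<lambda>z. fc L z (a z) (b z) (c z)) x) (e2 L u x) =
      connF L beta (R x / N * (P x / l)) (R x / N * (Q x / l)) (- (l / N)) (a x) (b x) (c x)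
        (qq (P x) dP (e2 L u x)) (qq (Q x) dQ (e2 L u x)) (qq (R x) (\<lambda>h. dS h * t) (e2 L u x))"
      using conn_fc[where X="e2 L u" and beta=beta and ?w1.0="R x / N * (P x / l)" and ?w2.0="R x / N * (Q x / l)" and ?w3.0="- (l / N)", OF L da db dc e2]
      unfolding e2[symmetric] connF_def .
    have abc: "a x = P x / N" "b x = Q x / N" "c x = R x / N"
      by (simp_all add: a_def b_def c_def N_def)
    have mc: "meancurv beta L u x =
      connF L beta (Q x / l) (- P x / l) 0 (P x / N) (Q x / N) (R x / N) (qq (P x) dP (e1 u x)) (qq (Q x) dQ (e1 u x)) (qq (R x) (\<lambda>h. dS h * t) (e1 u x))
    + connF L beta (R x / N * (P x / l)) (R x / N * (Q x / l)) (- (l / N)) (P x / N) (Q x / N) (R x / N)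
        (qq (P x) dP (e2 L u x)) (qq (Q x) dQ (e2 L u x)) (qq (R x) (\<lambda>h. dS h * t) (e2 L u x))"
      unfolding meancurv_def IIform_def frameE_def vL by (simp add: c1[unfolded abc] c2[unfolded abc])
    also have "\<dots> = Q x/l*qq (P x) dP (e1 u x) - P x/l*qq (Q x) dQ (e1 u x)
         + R x/N*(P x/l)*qq (P x) dP (e2 L u x) + R x/N*(Q x/l)*qq (Q x) dQ (e2 L u x)
         - l/N*qq (R x) (\<lambda>h. dS h * t) (e2 L u x)
         + (1-beta)*((R x/N)^3*(P x/l)*(Q x/l) - R x/N*(P x/l)*(Q x/l) + l/N*(R x/N)*(P x/N)*(Q x/l)) / sqrt L"
      by (rule alg_identity[OF L Npos lpos])
    also have "\<dots> = Phi (P x) (Q x) (S x) (dP v1) (dQ v1) (dS v1) (dP (X1 x)) (dP (X2 x)) (dP (X3 x))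
       (dQ (X1 x)) (dQ (X2 x)) (dQ (X3 x)) (dS (X1 x)) (dS (X2 x)) (dS (X3 x)) beta t"
    proof -
      have fl: "sqrt (P x^2 + Q x^2) = l" "S x * t = R x" "sqrt (P x^2 + Q x^2 + (R x)^2) = N"
        by (simp_all add: l_def R_def N_def)
      have dt: "\<And>f. linear f \<Longrightarrow> f (Xt3 L x) = t * f (X3 x)"
        by (simp add: Xt3_def linear_scale t_def)
      have E2: "dP (e2 L u x) = R x/N*(P x/l) * dP (X1 x) + R x/N*(Q x/l) * dP (X2 x) + (-(l/N)*t) * dP (X3 x)"
               "dQ (e2 L u x) = R x/N*(P x/l) * dQ (X1 x) + R x/N*(Q x/l) * dQ (X2 x) + (-(l/N)*t) * dQ (X3 x)"
               "dS (e2 L u x) = R x/N*(P x/l) * dS (X1 x) + R x/N*(Q x/l) * dS (X2 x) + (-(l/N)*t) * dS (X3 x)"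
        unfolding e2 using lP by (simp_all add: lin_fc dt)
      have st: "\<And>X. X / sqrt L = X * t" by (simp add: t_def)
      show ?thesis
        unfolding Phi_def quo_def Let_def fl qq_def E2 v1_def[symmetric] st
        by simp
    qed
    finally show ?thesis unfolding t_def .
  qed
  have ev: "eventually (\<lambda>L. Phi (P x) (Q x) (S x) (dP v1) (dQ v1) (dS v1) (dP (X1 x)) (dP (X2 x)) (dP (X3 x))
       (dQ (X1 x)) (dQ (X2 x)) (dQ (X3 x)) (dS (X1 x)) (dS (X2 x)) (dS (X3 x)) beta (1 / sqrt L) = meancurv beta L u x) at_top"
    using eventually_gt_at_top[of "0::real"] by (rule eventually_mono) (rule eq[symmetric])
  show ?thesis by (rule Lim_transform_eventually[OF lim ev])
qed

end
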